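(* For integers $k \geq 0$ and $0 \leq n \leq k$, let $a_{k,n} = (-2)^k + 2^n$. Let $0 \leq n \leq k_1$ and $0 \leq m \leq k_2$ with $(k_1, n) \neq (k_2, m)$. Then $a_{k_1,n} = a_{k_2,m}$ if and only if $k_1$ and $k_2$ are both odd, $n = k_1$ and $m = k_2$. *)

theory Defs
  imports Main
begin

definition a_seq :: "nat \<Rightarrow> nat \<Rightarrow> int" where
  "a_seq k n = (-2) ^ k + 2 ^ n"

end

theory Submission
  imports Defs
begin

lemma band_unique:
  fixes x :: int
  assumes "2^a < x" "x \<le> 2^(a+1)" "2^b < x" "x \<le> 2^(b+1)"
  shows "a = b"
proof (rule ccontr)
  assume "a \<noteq> b"
  then consider "a + 1 \<le> b" | "b + 1 \<le> a" by linarith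
  then show False
  proof cases
    case 1
    then have "(2::int)^(a+1) \<le> 2^b" by (rule power_increasing) simp
    then show False using assms by linarith
  next
    case 2
    then have "(2::int)^(b+1) \<le> 2^a" by (rule power_increasing) simp
    then show False using assms by linarith
  qed
qed

lemma band_unique2:
  fixes x :: int
  assumes "2^a \<le> x" "x < 2^(a+1)" "2^b \<le> x" "x < 2^(b+1)"
  shows "a = b"
proof (rule ccontr)
  assume "a \<noteq> b"
  then consider "a + 1 \<le> b" | "b + 1 \<le> a" by linarith
  then show False
  proof cases
    case 1
    then have "(2::int)^(a+1) \<le> 2^b" by (rule power_increasing) simp
    then show False using assms by linarith
  next
    case 2
    then have "(2::int)^(b+1) \<le> 2^a" by (rule power_increasing) simp
    then show False using assms by linarith
  qed
qed

lemma even_band: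
  assumes "even k" "n \<le> k"
  shows "(2::int)^k < a_seq k n \<and> a_seq k n \<le> 2^(k+1)"
proof -
  have "(2::int)^n \<le> 2^k" using assms(2) by (rule power_increasing) simp
  moreover have "(0::int) < 2^n" by simp
  ultimately show ?thesis using assms(1) by (simp add: a_seq_def)
qed

lemma odd_band:
  assumes "odd k" "n < k"
  shows "(2::int)^(k-1) \<le> - a_seq k n \<and> - a_seq k n < 2^(k-1+1)"
proof -
  have "(2::int)^n \<le> 2^(k-1)" using assms(2) by (intro power_increasing) auto
  moreover have "(0::int) < 2^n" by simp
  moreover have "(2::int)^k = 2 * 2^(k-1)" using assms(2)
    by (metis Suc_diff_1 gr_implies_not0 neq0_conv power_Suc)
  ultimately show ?thesis using assms(1) assms(2) by (simp add: a_seq_def)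
qed

lemma odd_top:
  assumes "odd k" shows "a_seq k k = 0"
  using assms by (simp add: a_seq_def)

lemma even_pos: "even k \<Longrightarrow> n \<le> k \<Longrightarrow> a_seq k n > 0"
  using even_band[of k n] by (smt (verit) zero_less_power)

theorem lemma3:
  fixes k1 k2 n m :: nat
  assumes "n \<le> k1" and "m \<le> k2" and "(k1, n) \<noteq> (k2, m)"
  shows "a_seq k1 n = a_seq k2 m \<longleftrightarrow> odd k1 \<and> odd k2 \<and> n = k1 \<and> m = k2"
proof
  assume R: "odd k1 \<and> odd k2 \<and> n = k1 \<and> m = k2"
  then show "a_seq k1 n = a_seq k2 m" using odd_top by simp
next
  assume E: "a_seq k1 n = a_seq k2 m"
  have powinj: "n = m" if "(2::int)^n = 2^m" for n m :: nat
    using that by (simp add: power_inject_exp)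
  show "odd k1 \<and> odd k2 \<and> n = k1 \<and> m = k2"
  proof (cases "even k1")
    case e1: True
    show ?thesis
    proof (cases "even k2")
      case True
      have "k1 = k2" using even_band[OF e1 assms(1)] even_band[OF True assms(2)] E
        band_unique by metis
      then have "(2::int)^n = 2^m" using E by (simp add: a_seq_def)
      then show ?thesis using powinj \<open>k1 = k2\<close> assms(3) by blast
    next
      case False
      have "a_seq k2 m \<le> 0"
      proof (cases "m = k2")
        case True then show ?thesis using False odd_top by simp
      next
        case False2: False
        then show ?thesis using odd_band[of k2 m] False assms(2)
          by (smt (verit) le_neq_implies_less zero_less_power)
      qed
      then show ?thesis using even_pos[OF e1 assms(1)] E by simp
    qed
  next
    case o1: False
    show ?thesis
    proof (cases "even k2")
      case True
      have "a_seq k1 n \<le> 0"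
      proof (cases "n = k1")
        case True then show ?thesis using o1 odd_top by simp
      next
        case False
        then show ?thesis using odd_band[of k1 n] o1 assms(1)
          by (smt (verit) le_neq_implies_less zero_less_power)
      qed
      then show ?thesis using even_pos[OF True assms(2)] E by simp
    next
      case o2: False
      show ?thesis
      proof (cases "n = k1")
        case n1: True
        show ?thesis
        proof (cases "m = k2")
          case True then show ?thesis using o1 o2 n1 by simp
        next
          case False
          then show ?thesis using odd_band[of k2 m] o2 assms(2) E odd_top[OF o1] n1
            by (smt (verit) le_neq_implies_less zero_less_power)
        qed
      next
        case n1: False
        show ?thesis
        proof (cases "m = k2")
          case True then show ?thesis using odd_band[of k1 n] o1 assms(1) E odd_top[OF o2] n1
            by (smt (verit) le_neq_implies_less zero_less_power)
        next
          case False
          have b1: "(2::int)^(k1-1) \<le> - a_seq k1 n \<and> - a_seq k1 n < 2^(k1-1+1)"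
            using odd_band[of k1 n] o1 assms(1) n1 by simp
          have b2: "(2::int)^(k2-1) \<le> - a_seq k2 m \<and> - a_seq k2 m < 2^(k2-1+1)"
            using odd_band[of k2 m] o2 assms(2) False by simp
          have "k1 - 1 = k2 - 1" using b1 b2 E band_unique2 by metis
          then have "k1 = k2" using o1 o2 by (metis One_nat_def Suc_pred odd_pos)
          then have "(2::int)^n = 2^m" using E by (simp add: a_seq_def)
          then show ?thesis using powinj \<open>k1 = k2\<close> assms(3) by blast
        qed
      qed
    qed
  qed
qed

end
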